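(* Consider the discrete-time system $x_{k+1}=f(x_k,u_k,w_k)$, $y_k=h(x_k,v_k)$ ($x\in\mathbb{R}^n$, $u\in\mathbb{R}^m$, $w\in\mathbb{R}^q$, $v\in\mathbb{R}^r$, $y\in\mathbb{R}^p$, $f,h$ continuously differentiable), and suppose there is a diffeomorphism $\phi$ such that $\bar{x}=\phi(x)$ transforms it into $$\bar{x}_{k+1}=f_1(\bar{x}_k,u_k)+Bf_2(w_k,\bar{x}_k,u_k),\qquad y_k=C\bar{x}_k+g(v_k),$$ with $C\in\mathbb{R}^{p\times n}$, $B\in\mathbb{R}^{n\times s}$ and $f_1,f_2,g$ continuously differentiable. If $\operatorname{rank}(CB)=\operatorname{rank}(B)$, then there exist a diffeomorphism $T=(T_\flat,T_\sharp):\mathbb{R}^n\to\mathbb{R}^{n_\flat+n_\sharp}$ and a continuously differentiable $\psi:\mathbb{R}^p\times\mathbb{R}^{n_\sharp}\times\mathbb{R}^r\to\mathbb{R}^{n_\flat}$ such that, writing $z=T(x)=(z^\flat,z^\sharp)$, $f_\sharp(z^\sharp,z^\flat,u,w):=T_\sharp(f(T^{-1}(z),u,w))$ and $h_T(z^\sharp,z^\flat,v):=h(T^{-1}(z),v)$: (a) $z^\flat=\psi(y,z^\sharp,v)$ whenever $y=h_T(z^\sharp,z^\flat,v)$, and (b) $\frac{\partial f_\sharp^i}{\partial w}(z^\sharp,z^\flat,u,w)=0$ for all $i\in\{1,\dots,n_\sharp\}$ and all arguments, where $f^i_\sharp$ is the $i$-th component of $f_\sharp$. *)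

theory Defs
  imports "HOL-Analysis.Analysis"
begin

definition C1 :: "('a::real_normed_vector \<Rightarrow> 'b::real_normed_vector) \<Rightarrow> bool" where
  "C1 F \<longleftrightarrow> (\<exists>F' :: 'a \<Rightarrow> 'a \<Rightarrow>\<^sub>L 'b.
      (\<forall>x. (F has_derivative blinfun_apply (F' x)) (at x)) \<and> continuous_on UNIV F')"

definition diffeo :: "('a::real_normed_vector \<Rightarrow> 'b::real_normed_vector) \<Rightarrow> bool" where
  "diffeo F \<longleftrightarrow> bij F \<and> C1 F \<and> C1 (inv F)"

text \<open>Projection of z onto the sharp coordinates (those not in the flat index set I);
  the flat coordinates are set to 0.\<close>
definition sharp_part :: "'n set \<Rightarrow> real^'n \<Rightarrow> real^'n" where
  "sharp_part I z = (\<chi> i. if i \<in> I then 0 else z $ i)"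

end

theory Submission
  imports Defs
begin

lemma C1_linear: assumes "bounded_linear F" shows "C1 F"
  unfolding C1_def
  apply (rule exI[of _ "\<lambda>_. Blinfun F"])
  using assms by (simp add: bounded_linear_Blinfun_apply bounded_linear_imp_has_derivative)

lemma C1_cont: "C1 F \<Longrightarrow> continuous_on UNIV F"
  unfolding C1_def by (meson continuous_at_imp_continuous_on has_derivative_continuous)

lemma C1_compose: assumes "C1 F" "C1 G" shows "C1 (G \<circ> F)"
proof -
  obtain F' where F: "\<And>x. (F has_derivative blinfun_apply (F' x)) (at x)" "continuous_on UNIV F'"
    using assms(1) unfolding C1_def by blast
  obtain G' where G: "\<And>x. (G has_derivative blinfun_apply (G' x)) (at x)" "continuous_on UNIV G'"
    using assms(2) unfolding C1_def by blast
  have cF: "continuous_on UNIV F" using C1_cont[OF assms(1)] .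
  show ?thesis unfolding C1_def
  proof (intro exI[of _ "\<lambda>x. G' (F x) o\<^sub>L F' x"] conjI allI)
    fix x show "((G \<circ> F) has_derivative blinfun_apply (G' (F x) o\<^sub>L F' x)) (at x)"
    proof -
      have e: "blinfun_apply (G' (F x) o\<^sub>L F' x) = (\<lambda>v. G' (F x) (F' x v))" by (rule ext) simp
      show ?thesis unfolding e using diff_chain_at[OF F(1) G(1)] by (simp add: o_def)
    qed
  next
    have "continuous_on UNIV (G' \<circ> F)"
      by (rule continuous_on_compose[OF cF]) (metis G(2) continuous_on_subset subset_UNIV)
    then show "continuous_on UNIV (\<lambda>x. G' (F x) o\<^sub>L F' x)"
      by (intro bounded_bilinear.continuous_on[OF bounded_bilinear_blinfun_compose] F(2)) (simp add: o_def)
  qed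
qed

lemma C1_diff: assumes "C1 F" "C1 G" shows "C1 (\<lambda>x. F x - G x)"
proof -
  obtain F' where F: "\<And>x. (F has_derivative blinfun_apply (F' x)) (at x)" "continuous_on UNIV F'"
    using assms(1) unfolding C1_def by blast
  obtain G' where G: "\<And>x. (G has_derivative blinfun_apply (G' x)) (at x)" "continuous_on UNIV G'"
    using assms(2) unfolding C1_def by blast
  show ?thesis unfolding C1_def
  proof (intro exI[of _ "\<lambda>x. F' x - G' x"] conjI allI)
    fix x show "((\<lambda>x. F x - G x) has_derivative blinfun_apply (F' x - G' x)) (at x)"
    proof -
      have e: "blinfun_apply (F' x - G' x) = (\<lambda>v. F' x v - G' x v)" by (rule ext) (simp add: blinfun.diff_left)
      show ?thesis unfolding e using has_derivative_diff[OF F(1) G(1)] .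
    qed
  next
    show "continuous_on UNIV (\<lambda>x. F' x - G' x)" using F(2) G(2) by (intro continuous_intros)
  qed
qed

lemma coord_iso:
  fixes S :: "(real^'n) set"
  assumes S: "subspace S"
  obtains L :: "real^'n \<Rightarrow> real^'n" and I :: "'n set" where "linear L" "bij L" "L ` S = {x. \<forall>i. i \<notin> I \<longrightarrow> x $ i = 0}"
proof -
  define k where "k = dim S"
  have "k \<le> CARD('n)" unfolding k_def
    by (metis dim_UNIV dim_subset subset_UNIV DIM_cart DIM_real mult.right_neutral)
  then obtain I :: "'n set" where I: "card I = k"
    using obtain_subset_with_card_n[of k "UNIV::'n set"] by metis
  define S' where "S' = {x :: real^'n. \<forall>i. i \<notin> I \<longrightarrow> x $ i = 0}"
  have S'sub: "subspace S'" unfolding S'_def subspace_def by auto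
  have AI: "(\<lambda>i. axis i (1::real)) ` I \<subseteq> Basis" by (auto simp: Basis_vec_def)
  have "S' = {x. \<forall>i\<in>Basis. i \<notin> (\<lambda>i. axis i (1::real)) ` I \<longrightarrow> x \<bullet> i = 0}"
    unfolding S'_def by (auto simp: Basis_vec_def inner_axis axis_eq_axis)
  then have dS': "dim S' = k" using dim_substandard[OF AI] I
    by (simp add: card_image inj_on_def axis_eq_axis)
  obtain Bs where Bs: "finite Bs" "Bs \<subseteq> S" "independent Bs" "span Bs = S" "card Bs = k"
    using basis_subspace_exists[OF S] k_def by metis
  obtain Cs where Cs: "finite Cs" "Cs \<subseteq> S'" "independent Cs" "span Cs = S'" "card Cs = k"
    using basis_subspace_exists[OF S'sub] dS' by metis
  obtain B where B: "Bs \<subseteq> B" "independent B" "span B = UNIV"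
    using maximal_independent_subset_extend[OF _ Bs(3), of UNIV] by (metis span_UNIV subset_UNIV top.extremum_uniqueI)
  obtain C where C: "Cs \<subseteq> C" "independent C" "span C = UNIV"
    using maximal_independent_subset_extend[OF _ Cs(3), of UNIV] by (metis span_UNIV subset_UNIV top.extremum_uniqueI)
  have fB: "finite B" "finite C" using B(2) C(2) independent_imp_finite by blast+
  have cB: "card B = card C"
    using basis_card_eq_dim[of B UNIV] basis_card_eq_dim[of C UNIV] B(2,3) C(2,3) by simp
  obtain e1 where e1: "bij_betw e1 Bs Cs" using finite_same_card_bij Bs Cs by metis
  obtain e2 where e2: "bij_betw e2 (B - Bs) (C - Cs)"
    using finite_same_card_bij[of "B - Bs" "C - Cs"] fB cB Bs Cs B C
    by (metis card_Diff_subset finite_Diff)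
  define e where "e x = (if x \<in> Bs then e1 x else e2 x)" for x
  have eBs: "e ` Bs = Cs" using e1 unfolding e_def bij_betw_def by auto
  have eB: "e ` B = C"
  proof -
    have "e ` (B - Bs) = C - Cs" using e2 unfolding e_def bij_betw_def by auto
    then show ?thesis using eBs B(1) C(1) by blast
  qed
  define L where "L = construct B e"
  have lin: "linear L" unfolding L_def using B(2) by (rule linear_construct)
  have LB: "L ` X = e ` X" if "X \<subseteq> B" for X
    unfolding L_def using construct_basis[OF B(2)] that by (intro image_cong) auto
  have "L ` S = S'"
    using span_linear_image[OF lin, of Bs] unfolding Bs(4) Cs(4)[symmetric] LB[OF B(1)] eBs by simp
  moreover have sL: "surj L"
    using span_linear_image[OF lin, of B] unfolding B(3) C(3)[symmetric] LB[OF order_refl] eB by simp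
  moreover have "inj L" using linear_surjective_imp_injective[OF lin sL] by simp
  ultimately show ?thesis apply - apply (rule that[of L I]) using lin unfolding S'_def bij_def by auto
qed

lemma dim_eq_inj:
  fixes f :: "'a::euclidean_space \<Rightarrow> 'b::euclidean_space"
  assumes lf: "linear f" and S: "subspace S" and d: "dim (f ` S) = dim S"
  shows "inj_on f S"
proof -
  obtain Bs where Bs: "finite Bs" "Bs \<subseteq> S" "independent Bs" "span Bs = S" "card Bs = dim S"
    using basis_subspace_exists[OF S] by metis
  have sp: "span (f ` Bs) = f ` S" using span_linear_image[OF lf, of Bs] Bs(4) by simp
  have "dim (f ` S) \<le> card (f ` Bs)"
    using dim_le_card[of "f ` S" "f ` Bs"] sp Bs(1) span_superset by auto
  moreover have "card (f ` Bs) \<le> card Bs" using Bs(1) card_image_le by blast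
  ultimately have c: "card (f ` Bs) = card Bs" "card (f ` Bs) = dim (f ` S)" using d Bs(5) by auto
  have "independent (f ` Bs)"
    using card_eq_dim[of "f ` Bs" "f ` S"] c(2) Bs(1,2) sp span_superset by auto
  moreover have "inj_on f Bs" using eq_card_imp_inj_on[OF Bs(1) c(1)] .
  ultimately show ?thesis
    using linear_inj_on_span_iff_independent_image[OF lf] Bs(4) by metis
qed



theorem proposition1:
  fixes f :: "real^'n \<Rightarrow> real^'m \<Rightarrow> real^'q \<Rightarrow> real^'n"
    and h :: "real^'n \<Rightarrow> real^'r \<Rightarrow> real^'p"
    and \<phi> :: "real^'n \<Rightarrow> real^'n"
    and f1 :: "real^'n \<Rightarrow> real^'m \<Rightarrow> real^'n"
    and f2 :: "real^'q \<Rightarrow> real^'n \<Rightarrow> real^'m \<Rightarrow> real^'s"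
    and g :: "real^'r \<Rightarrow> real^'p"
    and C :: "real^'n^'p"
    and B :: "real^'s^'n"
  assumes f_C1: "C1 (\<lambda>(x, u, w). f x u w)"
    and h_C1: "C1 (\<lambda>(x, v). h x v)"
    and phi_diffeo: "diffeo \<phi>"
    and f1_C1: "C1 (\<lambda>(xb, u). f1 xb u)"
    and f2_C1: "C1 (\<lambda>(w, xb, u). f2 w xb u)"
    and g_C1: "C1 g"
    and f_transf: "\<And>x u w. \<phi> (f x u w) = f1 (\<phi> x) u + B *v f2 w (\<phi> x) u"
    and h_transf: "\<And>x v. h x v = C *v \<phi> x + g v"
    and rank_cond: "rank (C ** B) = rank B"
  shows "\<exists>(T :: real^'n \<Rightarrow> real^'n) (I :: 'n set)
            (\<psi> :: (real^'p) \<times> (real^'n) \<times> (real^'r) \<Rightarrow> real^'n).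
           diffeo T \<and> C1 \<psi> \<and>
           (\<forall>z v y. y = h (inv T z) v \<longrightarrow>
                (\<forall>i\<in>I. z $ i = \<psi> (y, sharp_part I z, v) $ i)) \<and>
           (\<forall>i. i \<notin> I \<longrightarrow> (\<forall>z u w.
                ((\<lambda>w'. T (f (inv T z) u w') $ i) has_derivative (\<lambda>_. 0)) (at w)))"
  proof -
  have bphi: "bij \<phi>" and Cphi: "C1 \<phi>" and Cphii: "C1 (inv \<phi>)"
    using phi_diffeo unfolding diffeo_def by auto
  define S where "S = range (\<lambda>x. B *v x)"
  have linB: "linear (\<lambda>x. B *v x)" by (rule matrix_vector_mul_linear)
  have linC: "linear (\<lambda>x. C *v x)" by (rule matrix_vector_mul_linear)
  have subS: "subspace S" unfolding S_def
    by (rule linear_subspace_image[OF linB subspace_UNIV])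
  obtain L :: "real^'n \<Rightarrow> real^'n" and I :: "'n set"
    where linL: "linear L" and bL: "bij L" and LS: "L ` S = {x. \<forall>i. i \<notin> I \<longrightarrow> x $ i = 0}"
    by (rule coord_iso[OF subS])
  have blL: "bounded_linear L" using linL linear_conv_bounded_linear by blast
  have blLi: "bounded_linear (inv L)"
    using inj_linear_imp_inv_bounded_linear[OF blL] bL bij_is_inj by blast
  have linLi: "linear (inv L)" using blLi bounded_linear.linear by blast
  have LLi: "L (inv L x) = x" for x using bL by (simp add: bij_is_surj surj_f_inv_f)
  have LiL: "inv L (L x) = x" for x using bL by (simp add: bij_is_inj inv_f_f)
  have phiphii: "\<phi> (inv \<phi> x) = x" for x using bphi by (simp add: bij_is_surj surj_f_inv_f)
  have "rank (C ** B) = dim ((\<lambda>x. C *v x) ` S)"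
    unfolding rank_dim_range S_def image_image matrix_vector_mul_assoc ..
  then have "dim ((\<lambda>x. C *v x) ` S) = dim S"
    using rank_cond rank_dim_range[of B] S_def by simp
  then have injC: "inj_on (\<lambda>x. C *v x) S" by (rule dim_eq_inj[OF linC subS])
  obtain M where linM: "linear M" and MC: "\<And>x. x \<in> S \<Longrightarrow> M (C *v x) = x"
  proof -
    have sS: "span S = S" using subS by (simp add: span_eq_iff)
    show ?thesis using linear_inj_on_left_inverse[OF linC, of S] injC that unfolding sS by blast
  qed
  have blM: "bounded_linear M" using linM linear_conv_bounded_linear by blast
  define T where "T = L \<circ> \<phi>"
  have bT: "bij T" unfolding T_def using bphi bL by (rule bij_comp)
  have invT: "inv T = inv \<phi> \<circ> inv L" unfolding T_def using o_inv_distrib[OF bL bphi] .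
  have dT: "diffeo T" unfolding diffeo_def invT
    using bT C1_compose[OF Cphi C1_linear[OF blL]] C1_compose[OF C1_linear[OF blLi] Cphii]
    unfolding T_def by simp
  define \<psi> where "\<psi> = (\<lambda>p :: (real^'p) \<times> (real^'n) \<times> (real^'r).
      L (M (fst p - g (snd (snd p)) - C *v inv L (fst (snd p)))))"
  define A where "A = (\<lambda>p :: (real^'p) \<times> (real^'n) \<times> (real^'r).
      L (M (fst p - C *v inv L (fst (snd p)))))"
  have linInner: "linear (\<lambda>p :: (real^'p) \<times> (real^'n) \<times> (real^'r). fst p - C *v inv L (fst (snd p)))"
  proof -
    have b1: "bounded_linear (\<lambda>p :: (real^'p) \<times> (real^'n) \<times> (real^'r). fst (snd p))"
      by (rule bounded_linear_compose[OF bounded_linear_fst bounded_linear_snd])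
    have b2: "bounded_linear (\<lambda>p :: (real^'p) \<times> (real^'n) \<times> (real^'r). C *v inv L (fst (snd p)))"
      by (rule bounded_linear_compose[OF matrix_vector_mul_bounded_linear bounded_linear_compose[OF blLi b1]])
    show ?thesis using bounded_linear_sub[OF bounded_linear_fst b2] bounded_linear.linear by blast
  qed
  have "linear A" unfolding A_def
    using linear_compose[OF linear_compose[OF linInner linM] linL] by (simp add: o_def)
  then have blA: "bounded_linear A" using linear_conv_bounded_linear by blast
  have blLM: "bounded_linear (L \<circ> M)" using bounded_linear_compose[OF blL blM] by (simp add: o_def)
  have blss: "bounded_linear (\<lambda>p :: (real^'p) \<times> (real^'n) \<times> (real^'r). snd (snd p))"
    by (intro bounded_linear_compose[OF bounded_linear_snd] bounded_linear_snd)
  have psi_eq: "\<psi> = (\<lambda>p. A p - ((L \<circ> M) \<circ> (g \<circ> (\<lambda>p. snd (snd p)))) p)"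
  proof
    fix p :: "(real^'p) \<times> (real^'n) \<times> (real^'r)"
    have "M (fst p - g (snd (snd p)) - C *v inv L (fst (snd p)))
        = M (fst p - C *v inv L (fst (snd p))) - M (g (snd (snd p)))"
    proof -
      have "fst p - g (snd (snd p)) - C *v inv L (fst (snd p)) = (fst p - C *v inv L (fst (snd p))) - g (snd (snd p))"
        by (simp add: diff_diff_eq add.commute)
      then show ?thesis by (simp only: linear_diff[OF linM])
    qed
    then show "\<psi> p = A p - ((L \<circ> M) \<circ> (g \<circ> (\<lambda>p. snd (snd p)))) p"
      unfolding \<psi>_def A_def by (simp add: linear_diff[OF linL])
  qed
  have Cpsi: "C1 \<psi>"
  proof -
    have c1: "C1 (g \<circ> (\<lambda>p :: (real^'p) \<times> (real^'n) \<times> (real^'r). snd (snd p)))"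
      by (rule C1_compose[OF C1_linear[OF blss] g_C1])
    have c2: "C1 ((L \<circ> M) \<circ> (g \<circ> (\<lambda>p :: (real^'p) \<times> (real^'n) \<times> (real^'r). snd (snd p))))"
      by (rule C1_compose[OF c1 C1_linear[OF blLM]])
    show ?thesis unfolding psi_eq by (rule C1_diff[OF C1_linear[OF blA] c2])
  qed
  have flat: "\<forall>z v y. y = h (inv T z) v \<longrightarrow>
                (\<forall>i\<in>I. z $ i = \<psi> (y, sharp_part I z, v) $ i)"
  proof (intro allI impI ballI)
    fix z v y i assume y: "y = h (inv T z) v" and i: "i \<in> I"
    define b where "b = sharp_part I z"
    define a where "a = z - b"
    have "a \<in> L ` S" unfolding LS a_def b_def sharp_part_def by auto
    then have aS: "inv L a \<in> S" using LiL by auto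
    have "y = C *v inv L z + g v" unfolding y h_transf invT by (simp add: phiphii)
    then have "y - g v - C *v inv L b = C *v inv L a"
      unfolding a_def by (simp add: linear_diff[OF linLi] matrix_vector_mult_diff_distrib)
    then have "\<psi> (y, b, v) = a" unfolding \<psi>_def using MC[OF aS] LLi by simp
    moreover have "a $ i = z $ i" unfolding a_def b_def sharp_part_def using i by simp
    ultimately show "z $ i = \<psi> (y, sharp_part I z, v) $ i" unfolding b_def by simp
  qed
  have sharp: "\<forall>i. i \<notin> I \<longrightarrow> (\<forall>z u w.
                ((\<lambda>w'. T (f (inv T z) u w') $ i) has_derivative (\<lambda>_. 0)) (at w))"
  proof (intro allI impI)
    fix i z u w assume i: "i \<notin> I"
    define x where "x = inv T z"
    have "T (f x u w') $ i = L (f1 (\<phi> x) u) $ i" for w'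
    proof -
      have "L (B *v f2 w' (\<phi> x) u) \<in> L ` S" unfolding S_def by auto
      then have "L (B *v f2 w' (\<phi> x) u) $ i = 0" using LS i by auto
      then show ?thesis unfolding T_def using f_transf linear_add[OF linL] by simp
    qed
    then have "(\<lambda>w'. T (f (inv T z) u w') $ i) = (\<lambda>_. L (f1 (\<phi> x) u) $ i)"
      unfolding x_def by auto
    then show "((\<lambda>w'. T (f (inv T z) u w') $ i) has_derivative (\<lambda>_. 0)) (at w)"
      by (simp add: has_derivative_const)
  qed
  show ?thesis using dT Cpsi flat sharp by blast
qed

end
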